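(* Let $\Gamma\le\mathrm{Iso}(\mathbb{R}^{r,s})$ be a subgroup whose centralizer in $\mathrm{Iso}(\mathbb{R}^{r,s})$ has an open orbit in $\mathbb{R}^{r,s}$, let $\Delta$ be the center of $\Gamma$, and let $U_0=U_\Gamma\cap U_\Gamma^\perp$. Then $A\cdot U_\Delta^\perp\subseteq U_0$ for every $(I+A,v)\in\Gamma$.
   Context: $\mathbb{R}^{r,s}$ denotes $\mathbb{R}^{n}$, $n=r+s$, with a nondegenerate symmetric bilinear form $\langle\cdot,\cdot\rangle$ of signature $(r,s)$; $\mathrm{Iso}(\mathbb{R}^{r,s})$ is its group of affine isometries, whose elements are written $\gamma=(I+A,v)\colon x\mapsto(I+A)x+v$. For a subset $\Lambda$ of $\Gamma$, $U_\Lambda=\sum_{(I+A,v)\in\Lambda}\operatorname{im}A$; $\perp$ denotes orthogonal complement with respect to $\langle\cdot,\cdot\rangle$. Known facts (Wolf) for such $\Gamma$: every $(I+A,v)\in\Gamma$ satisfies $A^2=0$, $Av=0$, $\langle Ax,y\rangle=-\langle x,Ay\rangle$, $\ker A=(\operatorname{im}A)^\perp$, $\operatorname{im}A$ totally isotropic; for $\gamma_i=(I+A_i,v_i)\in\Gamma$ one has $A_1A_2A_3=0$ and $[\gamma_1,\gamma_2]=(I+2A_1A_2,2A_1v_2)$. *)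

theory Defs
  imports "HOL-Analysis.Analysis"
begin

text \<open>The scalar product space: a nondegenerate symmetric bilinear form on real^'n,
  given by its Gram matrix G:  <x,y> = x \<bullet> (G *v y).\<close>

definition bform :: "real^('n::finite)^'n \<Rightarrow> real^'n \<Rightarrow> real^'n \<Rightarrow> real" where
  "bform G x y = x \<bullet> (G *v y)"

definition nondeg_sym_form :: "real^('n::finite)^'n \<Rightarrow> bool" where
  "nondeg_sym_form G \<longleftrightarrow> transpose G = G \<and> invertible G"

text \<open>An affine map x \<mapsto> M x + v is represented by the pair (M, v).\<close>

type_synonym ('n) aff = "(real^'n^'n) \<times> (real^'n)"

definition aff_apply :: "('n::finite) aff \<Rightarrow> real^'n \<Rightarrow> real^'n" where
  "aff_apply g x = fst g *v x + snd g"

definition aff_comp :: "('n::finite) aff \<Rightarrow> 'n aff \<Rightarrow> 'n aff" where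
  "aff_comp g h = (fst g ** fst h, fst g *v snd h + snd g)"

definition aff_id :: "('n::finite) aff" where
  "aff_id = (mat 1, 0)"

definition aff_inv :: "('n::finite) aff \<Rightarrow> 'n aff" where
  "aff_inv g = (matrix_inv (fst g), - (matrix_inv (fst g) *v snd g))"

definition Iso :: "real^('n::finite)^'n \<Rightarrow> 'n aff set" where
  "Iso G = {g. \<forall>x y. bform G (fst g *v x) (fst g *v y) = bform G x y}"

definition is_subgroup_Iso :: "real^('n::finite)^'n \<Rightarrow> 'n aff set \<Rightarrow> bool" where
  "is_subgroup_Iso G \<Gamma> \<longleftrightarrow> \<Gamma> \<subseteq> Iso G \<and> aff_id \<in> \<Gamma> \<and>
     (\<forall>g\<in>\<Gamma>. \<forall>h\<in>\<Gamma>. aff_comp g h \<in> \<Gamma>) \<and> (\<forall>g\<in>\<Gamma>. aff_inv g \<in> \<Gamma>)"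

definition centralizer_Iso :: "real^('n::finite)^'n \<Rightarrow> 'n aff set \<Rightarrow> 'n aff set" where
  "centralizer_Iso G \<Gamma> = {g \<in> Iso G. \<forall>h\<in>\<Gamma>. aff_comp g h = aff_comp h g}"

definition has_open_orbit :: "('n::finite) aff set \<Rightarrow> bool" where
  "has_open_orbit H \<longleftrightarrow> (\<exists>x. open ((\<lambda>g. aff_apply g x) ` H))"

definition group_center :: "('n::finite) aff set \<Rightarrow> 'n aff set" where
  "group_center \<Gamma> = {g \<in> \<Gamma>. \<forall>h\<in>\<Gamma>. aff_comp g h = aff_comp h g}"

text \<open>For \<gamma> = (I + A, v), A = M - I.\<close>

definition linA :: "('n::finite) aff \<Rightarrow> real^'n^'n" where
  "linA g = fst g - mat 1"

text \<open>U_\<Lambda> = sum over \<gamma> \<in> \<Lambda> of im A.\<close>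

definition U_of :: "('n::finite) aff set \<Rightarrow> (real^'n) set" where
  "U_of \<Lambda> = span (\<Union>g\<in>\<Lambda>. range (\<lambda>x. linA g *v x))"

definition orth :: "real^('n::finite)^'n \<Rightarrow> (real^'n) set \<Rightarrow> (real^'n) set" where
  "orth G U = {x. \<forall>u\<in>U. bform G x u = 0}"

end

theory Submission
  imports Defs
begin

lemma bf_add1[simp]: "bform G (x+y) z = bform G x z + bform G y z"
  by (simp add: bform_def inner_add_left)
lemma bf_add2[simp]: "bform G z (x+y) = bform G z x + bform G z y"
  by (simp add: bform_def matrix_vector_right_distrib inner_add_right)
lemma bf_diff1[simp]: "bform G (x-y) z = bform G x z - bform G y z"
  by (simp add: bform_def inner_diff_left)
lemma bf_diff2[simp]: "bform G z (x-y) = bform G z x - bform G z y"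
  by (simp add: bform_def matrix_vector_mult_diff_distrib inner_diff_right)
lemma bf_scale1[simp]: "bform G (c *\<^sub>R x) z = c * bform G x z"
  by (simp add: bform_def)
lemma bf_scale2[simp]: "bform G z (c *\<^sub>R x) = c * bform G z x"
  by (simp add: bform_def matrix_vector_mult_scaleR)
lemma bf_minus1[simp]: "bform G (- x) z = - bform G x z"
  using bf_scale1[of G "-1" x z] by simp
lemma bf_minus2[simp]: "bform G z (- x) = - bform G z x"
  using bf_scale2[of G z "-1" x] by (simp add: matrix_vector_mult_scaleR)
lemma bf_zero[simp]: "bform G 0 z = 0" "bform G z 0 = 0"
  by (simp_all add: bform_def)
lemma bf_sym: "transpose G = G \<Longrightarrow> bform G x y = bform G y x"
  unfolding bform_def
  by (metis dot_lmul_matrix inner_commute transpose_matrix_vector)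
lemma bf_nondeg: assumes "invertible G" "\<forall>y. bform G x y = 0" shows "x = 0"
proof -
  obtain G' where "G ** G' = mat 1" using assms(1) unfolding invertible_def by blast
  then have "G *v (G' *v x) = x" by (simp add: matrix_vector_mul_assoc)
  then have "bform G x (G' *v x) = x \<bullet> x" by (simp add: bform_def)
  with assms(2) show ?thesis by simp
qed

lemma mv_minus: "A *v (- x) = - (A *v (x::real^'n))"
  by (metis diff_0 matrix_vector_mult_0_right matrix_vector_mult_diff_distrib)

lemma fstA: "fst g *v x = x + linA g *v x"
  by (simp add: linA_def matrix_vector_mult_diff_rdistrib)

lemma quad0: assumes "(d::real) > 0" "\<forall>t. \<bar>t\<bar> < d \<longrightarrow> t*b + t^2*a = 0"
  shows "a = 0 \<and> b = 0"
proof -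
  have 1: "(d/2)*b + (d/2)^2*a = 0" using assms(2)[rule_format, of "d/2"] assms(1) by simp
  have 2: "(d/4)*b + (d/4)^2*a = 0" using assms(2)[rule_format, of "d/4"] assms(1) by simp
  have e1: "(d/2)*(b + (d/2)*a) = 0" using 1 by (simp add: power2_eq_square algebra_simps)
  have e2: "(d/4)*(b + (d/4)*a) = 0" using 2 by (simp add: power2_eq_square algebra_simps)
  have f1: "b + (d/2)*a = 0" using e1 assms(1) by simp
  have f2: "b + (d/4)*a = 0" using e2 assms(1) by simp
  from f1 f2 have "(d/4)*a = 0" by linarith
  with assms(1) have "a = 0" by simp
  with f1 show ?thesis by simp
qed

lemma disp_comm:
  assumes "aff_comp z g = aff_comp g z"
  shows "aff_apply g (aff_apply z y) - aff_apply z y = fst z *v (aff_apply g y - y)"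
proof -
  from assms have m: "fst z ** fst g = fst g ** fst z"
    and t: "fst z *v snd g + snd z = fst g *v snd z + snd g"
    by (auto simp: aff_comp_def prod_eq_iff)
  have "aff_apply g (aff_apply z y) - aff_apply z y
     = (fst g ** fst z) *v y + (fst g *v snd z + snd g) - fst z *v y - snd z"
    by (simp add: aff_apply_def matrix_vector_right_distrib matrix_vector_mul_assoc)
  also have "\<dots> = (fst z ** fst g) *v y + (fst z *v snd g + snd z) - fst z *v y - snd z"
    using m t by simp
  also have "\<dots> = fst z *v (aff_apply g y - y)"
    by (simp add: aff_apply_def matrix_vector_right_distrib matrix_vector_mult_diff_distrib matrix_vector_mul_assoc)
  finally show ?thesis .
qed

lemma aff_id_cent: "aff_id \<in> centralizer_Iso G \<Gamma>"
  by (simp add: centralizer_Iso_def Iso_def aff_id_def aff_comp_def)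

lemma pair:
  assumes op: "open ((\<lambda>z. aff_apply z x0) ` centralizer_Iso G \<Gamma>)"
    and g: "g \<in> \<Gamma>" and h: "h \<in> \<Gamma>"
  shows "bform G (linA g *v u) (linA h *v u) = 0 \<and>
     bform G (aff_apply g x0 - x0) (linA h *v u) + bform G (linA g *v u) (aff_apply h x0 - x0) = 0"
proof -
  let ?O = "(\<lambda>z. aff_apply z x0) ` centralizer_Iso G \<Gamma>"
  define p where "p y = bform G (aff_apply g y - y) (aff_apply h y - y)" for y
  have const: "p y = p x0" if yO: "y \<in> ?O" for y
  proof -
    obtain z where z: "z \<in> centralizer_Iso G \<Gamma>" and y: "y = aff_apply z x0" using yO by blast
    from z g h have cg: "aff_comp z g = aff_comp g z" and ch: "aff_comp z h = aff_comp h z"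
      and iz: "z \<in> Iso G" by (auto simp: centralizer_Iso_def)
    have "p y = bform G (fst z *v (aff_apply g x0 - x0)) (fst z *v (aff_apply h x0 - x0))"
      unfolding p_def y using disp_comm[OF cg] disp_comm[OF ch] by simp
    also have "\<dots> = p x0" using iz by (simp add: Iso_def p_def)
    finally show ?thesis .
  qed
  have "x0 \<in> ?O" using aff_id_cent[of G \<Gamma>]
    by (metis (no_types, lifting) aff_apply_def aff_id_def add.right_neutral fst_conv image_eqI matrix_vector_mul_lid snd_conv)
  then obtain e where e: "e > 0" "ball x0 e \<subseteq> ?O" using op openE by blast
  define a0 where "a0 = aff_apply g x0 - x0"
  define b0 where "b0 = aff_apply h x0 - x0"
  define d where "d = e / (norm u + 1)"
  have d: "d > 0" using e by (simp add: d_def add_nonneg_pos)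
  have exp: "aff_apply g (x0 + t *\<^sub>R u) - (x0 + t *\<^sub>R u) = a0 + t *\<^sub>R (linA g *v u)"
    "aff_apply h (x0 + t *\<^sub>R u) - (x0 + t *\<^sub>R u) = b0 + t *\<^sub>R (linA h *v u)" for t
    by (simp_all add: a0_def b0_def aff_apply_def fstA matrix_vector_right_distrib matrix_vector_mult_scaleR algebra_simps)
  have "\<forall>t. \<bar>t\<bar> < d \<longrightarrow> t * (bform G a0 (linA h *v u) + bform G (linA g *v u) b0)
             + t^2 * bform G (linA g *v u) (linA h *v u) = 0"
  proof (intro allI impI)
    fix t :: real assume t: "\<bar>t\<bar> < d"
    have "norm (t *\<^sub>R u) = \<bar>t\<bar> * norm u" by simp
    also have "\<dots> \<le> \<bar>t\<bar> * (norm u + 1)" by (simp add: mult_left_mono)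
    also have "\<dots> < d * (norm u + 1)" using t by (simp add: add_nonneg_pos)
    also have "\<dots> = e" using norm_ge_zero[of u] unfolding d_def by (smt (verit) nonzero_divide_eq_eq)
    finally have "x0 + t *\<^sub>R u \<in> ball x0 e" by (simp add: dist_norm)
    with e have "p (x0 + t *\<^sub>R u) = p x0" using const by blast
    then have "bform G (a0 + t *\<^sub>R (linA g *v u)) (b0 + t *\<^sub>R (linA h *v u)) = bform G a0 b0"
      unfolding p_def exp by (simp add: a0_def b0_def)
    then show "t * (bform G a0 (linA h *v u) + bform G (linA g *v u) b0)
             + t^2 * bform G (linA g *v u) (linA h *v u) = 0"
      by (simp add: power2_eq_square algebra_simps)
  qed
  from quad0[OF d this] show ?thesis by (simp add: a0_def b0_def)
qed

lemma eq_by_form: "invertible G \<Longrightarrow> (\<And>y. bform G a y = bform G b y) \<Longrightarrow> a = b"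
  using bf_nondeg[of G "a - b"] by simp

lemma rels:
  assumes nd: "nondeg_sym_form G" and sg: "is_subgroup_Iso G \<Gamma>"
    and oo: "has_open_orbit (centralizer_Iso G \<Gamma>)"
  shows "\<And>g h x. g \<in> \<Gamma> \<Longrightarrow> h \<in> \<Gamma> \<Longrightarrow> linA g *v (linA h *v x) = - (linA h *v (linA g *v x))"
    and "\<And>g x. g \<in> \<Gamma> \<Longrightarrow> linA g *v (linA g *v x) = 0"
    and "\<And>g. g \<in> \<Gamma> \<Longrightarrow> linA g *v snd g = 0"
    and "\<And>g h. g \<in> \<Gamma> \<Longrightarrow> h \<in> \<Gamma> \<Longrightarrow> linA g *v snd h = - (linA h *v snd g)"
    and "\<And>g x y. g \<in> \<Gamma> \<Longrightarrow> bform G (linA g *v x) y = - bform G x (linA g *v y)"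
    and "\<And>g h k x. g \<in> \<Gamma> \<Longrightarrow> h \<in> \<Gamma> \<Longrightarrow> k \<in> \<Gamma> \<Longrightarrow>
           linA g *v (linA h *v (linA k *v x)) = 0"
proof -
  have sym: "transpose G = G" and inv: "invertible G" using nd by (auto simp: nondeg_sym_form_def)
  obtain x0 where op: "open ((\<lambda>z. aff_apply z x0) ` centralizer_Iso G \<Gamma>)"
    using oo by (auto simp: has_open_orbit_def)
  have Q1: "bform G (linA g *v u) (linA h *v w) + bform G (linA g *v w) (linA h *v u) = 0"
    if g: "g \<in> \<Gamma>" and h: "h \<in> \<Gamma>" for g h u w
  proof -
    have "bform G (linA g *v (u+w)) (linA h *v (u+w)) = 0" using pair[OF op g h] by blast
    moreover have "bform G (linA g *v u) (linA h *v u) = 0" using pair[OF op g h] by blast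
    moreover have "bform G (linA g *v w) (linA h *v w) = 0" using pair[OF op g h] by blast
    ultimately show ?thesis by (simp add: matrix_vector_right_distrib)
  qed
  have Q2: "bform G (snd g) (linA h *v u) + bform G (linA g *v u) (snd h) = 0"
    if g: "g \<in> \<Gamma>" and h: "h \<in> \<Gamma>" for g h u
  proof -
    have "bform G (aff_apply g x0 - x0) (linA h *v u) + bform G (linA g *v u) (aff_apply h x0 - x0) = 0"
      using pair[OF op g h] by blast
    moreover have "aff_apply g x0 - x0 = linA g *v x0 + snd g" "aff_apply h x0 - x0 = linA h *v x0 + snd h"
      by (simp_all add: aff_apply_def fstA)
    ultimately show ?thesis using Q1[OF g h, of x0 u] by simp
  qed
  have AA0: "bform G (linA g *v x) (linA g *v y) = 0" if g: "g \<in> \<Gamma>" for g x y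
    using Q1[OF g g, of x y] bf_sym[OF sym, of "linA g *v y" "linA g *v x"] by simp
  show skew: "bform G (linA g *v x) y = - bform G x (linA g *v y)" if g: "g \<in> \<Gamma>" for g x y
  proof -
    have "g \<in> Iso G" using g sg by (auto simp: is_subgroup_Iso_def)
    then have "bform G (fst g *v x) (fst g *v y) = bform G x y" by (simp add: Iso_def)
    then show ?thesis using AA0[OF g, of x y] by (simp add: fstA)
  qed
  show "linA g *v (linA g *v x) = 0" if g: "g \<in> \<Gamma>" for g x
    by (rule eq_by_form[OF inv]) (simp add: skew[OF g, of "linA g *v x"] AA0[OF g])
  show "linA g *v snd g = 0" if g: "g \<in> \<Gamma>" for g
  proof (rule eq_by_form[OF inv])
    fix y
    have "bform G (snd g) (linA g *v y) = 0"
      using Q2[OF g g, of y] bf_sym[OF sym, of "snd g" "linA g *v y"] by simp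
    then show "bform G (linA g *v snd g) y = bform G 0 y" by (simp add: skew[OF g])
  qed
  show anti: "linA g *v (linA h *v x) = - (linA h *v (linA g *v x))" if g: "g \<in> \<Gamma>" and h: "h \<in> \<Gamma>" for g h x
  proof (rule eq_by_form[OF inv])
    fix y
    show "bform G (linA g *v (linA h *v x)) y = bform G (- (linA h *v (linA g *v x))) y"
      using Q1[OF h g, of x y] bf_sym[OF sym, of "linA g *v x" "linA h *v y"]
      by (simp add: skew[OF g] skew[OF h])
  qed
  show "linA g *v snd h = - (linA h *v snd g)" if g: "g \<in> \<Gamma>" and h: "h \<in> \<Gamma>" for g h
  proof (rule eq_by_form[OF inv])
    fix y
    show "bform G (linA g *v snd h) y = bform G (- (linA h *v snd g)) y"
    proof -
      have a: "bform G (linA g *v snd h) y = - bform G (snd h) (linA g *v y)" by (rule skew[OF g])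
      have b: "bform G (linA h *v snd g) y = - bform G (snd g) (linA h *v y)" by (rule skew[OF h])
      have c: "bform G (snd h) (linA g *v y) = bform G (linA g *v y) (snd h)" by (rule bf_sym[OF sym])
      show ?thesis using a b c Q2[OF g h, of y] by simp
    qed
  qed
  show "linA g *v (linA h *v (linA k *v x)) = 0"
    if g: "g \<in> \<Gamma>" and h: "h \<in> \<Gamma>" and k: "k \<in> \<Gamma>" for g h k x
  proof -
    have gh: "aff_comp g h \<in> \<Gamma>" using g h sg by (auto simp: is_subgroup_Iso_def)
    have L: "linA (aff_comp g h) *v y = linA g *v y + linA h *v y + linA g *v (linA h *v y)" for y
    proof -
      have "linA (aff_comp g h) *v y = fst g *v (fst h *v y) - y"
        by (simp add: linA_def aff_comp_def matrix_vector_mult_diff_rdistrib matrix_vector_mul_assoc)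
      then show ?thesis by (simp add: fstA matrix_vector_right_distrib)
    qed
    have "linA (aff_comp g h) *v (linA k *v x) = - (linA k *v (linA (aff_comp g h) *v x))"
      by (rule anti[OF gh k])
    then have "linA g *v (linA h *v (linA k *v x)) = - (linA k *v (linA g *v (linA h *v x)))"
      unfolding L using anti[OF g k, of x] anti[OF h k, of x]
      by (simp add: matrix_vector_right_distrib mv_minus algebra_simps)
    also have "\<dots> = - (linA g *v (linA h *v (linA k *v x)))"
      using anti[OF k g, of "linA h *v x"] anti[OF h k, of x]
      by (simp add: mv_minus)
    finally show ?thesis by (simp add: vec_eq_iff)
  qed
qed

lemma inv_lemma:
  assumes AA: "\<And>x. linA g *v (linA g *v x) = 0" and Av: "linA g *v snd g = 0"
  shows "fst (aff_inv g) *v x = x - linA g *v x" "snd (aff_inv g) = - snd g"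
proof -
  define X0 where "X0 = mat 1 - linA g"
  have X0v: "X0 *v y = y - linA g *v y" for y by (simp add: X0_def matrix_vector_mult_diff_rdistrib)
  have 1: "fst g ** X0 = mat 1"
    by (simp add: matrix_eq matrix_vector_mul_assoc[symmetric] X0v fstA matrix_vector_mult_diff_distrib AA)
  have 2: "X0 ** fst g = mat 1"
    by (simp add: matrix_eq matrix_vector_mul_assoc[symmetric] X0v fstA matrix_vector_right_distrib AA)
  have "\<exists>X. fst g ** X = mat 1 \<and> X ** fst g = mat 1" using 1 2 by blast
  then have "fst g ** matrix_inv (fst g) = mat 1 \<and> matrix_inv (fst g) ** fst g = mat 1"
    unfolding matrix_inv_def by (rule someI_ex)
  then have mi: "matrix_inv (fst g) ** fst g = mat 1" by blast
  have "matrix_inv (fst g) *v y = X0 *v y" for y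
  proof -
    have "matrix_inv (fst g) *v y = matrix_inv (fst g) *v (fst g *v (X0 *v y))"
      using 1 by (simp add: matrix_vector_mul_assoc)
    also have "\<dots> = X0 *v y" using mi by (simp add: matrix_vector_mul_assoc matrix_mul_assoc)
    finally show ?thesis .
  qed
  then show "fst (aff_inv g) *v x = x - linA g *v x" "snd (aff_inv g) = - snd g"
    by (simp_all add: aff_inv_def X0v Av)
qed

theorem lemma4p2:
  fixes G :: "real^'n^'n" and \<Gamma> :: "'n aff set"
  assumes "nondeg_sym_form G"
    and "is_subgroup_Iso G \<Gamma>"
    and "has_open_orbit (centralizer_Iso G \<Gamma>)"
  shows "\<forall>g\<in>\<Gamma>. (\<lambda>x. linA g *v x) ` orth G (U_of (group_center \<Gamma>))
           \<subseteq> U_of \<Gamma> \<inter> orth G (U_of \<Gamma>)"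
proof -
  note R = rels[OF assms]
  have sg: "\<And>g h. g \<in> \<Gamma> \<Longrightarrow> h \<in> \<Gamma> \<Longrightarrow> aff_comp g h \<in> \<Gamma>"
    "\<And>g. g \<in> \<Gamma> \<Longrightarrow> aff_inv g \<in> \<Gamma>" using assms(2) by (auto simp: is_subgroup_Iso_def)
  have comm: "\<exists>c\<in>group_center \<Gamma>. \<forall>x. linA c *v x = 2 *\<^sub>R (linA g *v (linA h *v x))"
    if g: "g \<in> \<Gamma>" and h: "h \<in> \<Gamma>" for g h
  proof -
    define c where "c = aff_comp (aff_comp g h) (aff_comp (aff_inv g) (aff_inv h))"
    have cG: "c \<in> \<Gamma>" unfolding c_def by (rule sg(1)[OF sg(1)[OF g h] sg(1)[OF sg(2)[OF g] sg(2)[OF h]]])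
    note ig = inv_lemma[of g, OF R(2)[OF g] R(3)[OF g]]
    note ih = inv_lemma[of h, OF R(2)[OF h] R(3)[OF h]]
    note rr = R(2)[OF g] R(2)[OF h] R(1)[OF h g] R(3)[OF g] R(3)[OF h] R(4)[OF h g]
    have cf: "fst c *v x = x + 2 *\<^sub>R (linA g *v (linA h *v x))" for x
    proof -
      have e0: "fst c *v x = fst g *v (fst h *v (fst (aff_inv g) *v (fst (aff_inv h) *v x)))"
        unfolding c_def by (simp add: aff_comp_def matrix_vector_mul_assoc[symmetric])
      have e1: "fst (aff_inv g) *v (fst (aff_inv h) *v x) = x - linA h *v x - linA g *v x + linA g *v (linA h *v x)"
        by (simp add: ig ih matrix_vector_mult_diff_distrib)
      have e2: "fst h *v (x - linA h *v x - linA g *v x + linA g *v (linA h *v x))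
           = x - linA g *v x + 2 *\<^sub>R (linA g *v (linA h *v x))"
        by (simp add: fstA[of h] rr matrix_vector_right_distrib matrix_vector_mult_diff_distrib scaleR_2 mv_minus)
      have e3: "fst g *v (x - linA g *v x + 2 *\<^sub>R (linA g *v (linA h *v x)))
           = x + 2 *\<^sub>R (linA g *v (linA h *v x))"
        by (simp add: fstA[of g] rr matrix_vector_right_distrib matrix_vector_mult_diff_distrib matrix_vector_mult_scaleR)
      show ?thesis using e0 e1 e2 e3 by simp
    qed
    have cs: "snd c = 2 *\<^sub>R (linA g *v snd h)"
    proof -
      have e0: "snd c = fst g *v (fst h *v (fst (aff_inv g) *v snd (aff_inv h) + snd (aff_inv g))) + (fst g *v snd h + snd g)"
        unfolding c_def by (simp add: aff_comp_def matrix_vector_mul_assoc[symmetric])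
      have e1: "fst (aff_inv g) *v snd (aff_inv h) + snd (aff_inv g) = - snd h + linA g *v snd h - snd g"
        by (simp add: ig ih mv_minus)
      have e2: "fst h *v (- snd h + linA g *v snd h - snd g) = - snd h + linA g *v snd h - snd g + linA g *v snd h"
        by (simp add: fstA[of h] rr matrix_vector_right_distrib matrix_vector_mult_diff_distrib mv_minus)
      have e3: "fst g *v (- snd h + linA g *v snd h - snd g + linA g *v snd h) = - snd h + linA g *v snd h - snd g"
        by (simp only: fstA[of g] rr matrix_vector_right_distrib matrix_vector_mult_diff_distrib mv_minus R(2)[OF g]) simp
      have "snd c = (- snd h + linA g *v snd h - snd g) + (snd h + linA g *v snd h + snd g)"
        using e0 e1 e2 e3 fstA[of g "snd h"] by simp
      then show ?thesis by (simp add: scaleR_2)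
    qed
    have "aff_comp c k = aff_comp k c" if k: "k \<in> \<Gamma>" for k
    proof -
      note kk = R(6)[OF g h k] R(6)[OF k g h]
      have f: "fst c ** fst k = fst k ** fst c"
        by (simp add: matrix_eq matrix_vector_mul_assoc[symmetric] cf fstA[of k] kk
            matrix_vector_right_distrib matrix_vector_mult_scaleR algebra_simps)
      have t1: "linA h *v snd k = - (linA k *v snd h)" by (rule R(4)[OF h k])
      have t2: "linA g *v (linA k *v snd h) = - (linA k *v (linA g *v snd h))" by (rule R(1)[OF g k])
      have t: "fst c *v snd k + snd c = fst k *v snd c + snd k"
        by (simp add: cf cs fstA[of k] t1 t2 mv_minus matrix_vector_mult_scaleR algebra_simps)
      show ?thesis using f t by (simp add: aff_comp_def)
    qed
    then have "c \<in> group_center \<Gamma>" using cG by (simp add: group_center_def)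
    moreover have "linA c *v x = 2 *\<^sub>R (linA g *v (linA h *v x))" for x
      using cf[of x] by (simp add: linA_def matrix_vector_mult_diff_rdistrib)
    ultimately show ?thesis by blast
  qed
  show ?thesis
  proof (intro ballI subsetI)
    fix g y assume g: "g \<in> \<Gamma>" and y: "y \<in> (\<lambda>x. linA g *v x) ` orth G (U_of (group_center \<Gamma>))"
    then obtain x where x: "x \<in> orth G (U_of (group_center \<Gamma>))" and yx: "y = linA g *v x" by blast
    have "y \<in> U_of \<Gamma>" unfolding yx U_of_def using g by (intro span_base) blast
    moreover have "y \<in> orth G (U_of \<Gamma>)"
      unfolding orth_def U_of_def
    proof (intro CollectI ballI)
      fix u assume "u \<in> span (\<Union>g\<in>\<Gamma>. range (\<lambda>x. linA g *v x))"
      then show "bform G y u = 0"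
      proof (induction rule: span_induct_alt)
        case base then show ?case by simp
      next
        case (step c z u)
        then obtain h w where h: "h \<in> \<Gamma>" and z: "z = linA h *v w" by blast
        obtain c' where c': "c' \<in> group_center \<Gamma>"
          and cl: "\<forall>x. linA c' *v x = 2 *\<^sub>R (linA g *v (linA h *v x))" using comm[OF g h] by blast
        have "linA c' *v w \<in> U_of (group_center \<Gamma>)" unfolding U_of_def using c' by (intro span_base) blast
        then have "bform G x (linA c' *v w) = 0" using x by (simp add: orth_def)
        then have "bform G x (linA g *v (linA h *v w)) = 0" using cl by simp
        then have "bform G y z = 0" unfolding yx z using R(5)[OF g] by simp
        then show ?case using step by simp
      qed
    qed
    ultimately show "y \<in> U_of \<Gamma> \<inter> orth G (U_of \<Gamma>)" by blast
  qed
qed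

end
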